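(* Let $K\subseteq\mathbb{R}^n$ be a proper cone and $A\in\mathbb{R}^{n\times n}$ nonsingular, $b\in\mathbb{R}^n$. Let $A=U-V$ be a convergent $K$-regular splitting and let $U=F-G$ be a convergent $K$-weak regular splitting of type II such that $VF^{-1}G=GF^{-1}V$. Then for any sequence of positive integers $s(k)\geq 1$, $k=0,1,2,\ldots$, and any initial vector $x_0$, the non-stationary two-stage iteration $$x_{k+1}=(F^{-1}G)^{s(k)}x_{k}+\sum_{j=0}^{s(k)-1}(F^{-1}G)^{j}F^{-1}(Vx_{k}+b),\qquad k=0,1,2,\ldots,$$ converges (to $A^{-1}b$).
   Context: A proper cone $K\subseteq\mathbb{R}^n$ is a closed, convex, pointed, solid cone. For $M\in\mathbb{R}^{n\times n}$, $M\geq_K 0$ means $MK\subseteq K$. A splitting $A=U-V$ (with $U$ nonsingular) is $K$-regular if $U^{-1}\geq_K 0$ and $V\geq_K 0$; it is a $K$-weak regular splitting of type II if $U^{-1}\geq_K 0$ and $VU^{-1}\geq_K 0$. A splitting is convergent if $\rho(U^{-1}V)<1$, $\rho$ denoting spectral radius. *)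

theory Defs
  imports "HOL-Analysis.Analysis"
begin

definition proper_cone :: "(real^'n) set \<Rightarrow> bool" where
  "proper_cone K \<longleftrightarrow> cone K \<and> closed K \<and> convex K \<and>
     K \<inter> uminus ` K = {0} \<and> interior K \<noteq> {}"

definition K_nonneg :: "(real^'n) set \<Rightarrow> real^'n^'n \<Rightarrow> bool" where
  "K_nonneg K M \<longleftrightarrow> (\<lambda>x. M *v x) ` K \<subseteq> K"

definition spec_rad :: "real^'n^'n \<Rightarrow> real" where
  "spec_rad M = Max {cmod z | z. det ((\<chi> i j. (if i = j then z else 0) - complex_of_real (M $ i $ j)) :: complex^'n^'n) = 0}"

primrec matpow :: "real^'n^'n \<Rightarrow> nat \<Rightarrow> real^'n^'n" where
  "matpow M 0 = mat 1"
| "matpow M (Suc k) = M ** matpow M k"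

definition K_regular_splitting :: "(real^'n) set \<Rightarrow> real^'n^'n \<Rightarrow> real^'n^'n \<Rightarrow> real^'n^'n \<Rightarrow> bool" where
  "K_regular_splitting K A U V \<longleftrightarrow> A = U - V \<and> invertible U \<and>
     K_nonneg K (matrix_inv U) \<and> K_nonneg K V"

definition K_weak_regular_splitting_II :: "(real^'n) set \<Rightarrow> real^'n^'n \<Rightarrow> real^'n^'n \<Rightarrow> real^'n^'n \<Rightarrow> bool" where
  "K_weak_regular_splitting_II K A U V \<longleftrightarrow> A = U - V \<and> invertible U \<and>
     K_nonneg K (matrix_inv U) \<and> K_nonneg K (V ** matrix_inv U)"

definition convergent_splitting :: "real^'n^'n \<Rightarrow> real^'n^'n \<Rightarrow> bool" where
  "convergent_splitting U V \<longleftrightarrow> spec_rad (matrix_inv U ** V) < 1"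

end

theory Submission
  imports Defs "HOL-Computational_Algebra.Polynomial" "HOL-Computational_Algebra.Fundamental_Theorem_Algebra"
begin

definition mpoly :: "complex poly \<Rightarrow> complex^'n^'n \<Rightarrow> complex^'n^'n" where
  "mpoly p M = fold_coeffs (\<lambda>a B. mat a + M ** B) p 0"

lemma mat_0_eq: "mat 0 = (0::'a::semiring_1^'n^'n)"
  by (simp add: vec_eq_iff mat_def)

lemma mat_add_eq: "mat (a + b) = mat a + (mat b :: 'a::semiring_1^'n^'n)"
  by (simp add: vec_eq_iff mat_def)

lemma matrix_add_rdistrib': "((A + B) ** C :: 'a::semiring_1^'n^'n) = A ** C + B ** C"
  by (vector matrix_matrix_mult_def sum.distrib[symmetric] field_simps)

lemma matrix_diff_rdistrib': "((A - B) ** C :: 'a::ring_1^'n^'n) = A ** C - B ** C"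
  by (vector matrix_matrix_mult_def sum_subtractf[symmetric] field_simps)

lemma matrix_diff_ldistrib': "(C ** (A - B) :: 'a::ring_1^'n^'n) = C ** A - C ** B"
  by (vector matrix_matrix_mult_def sum_subtractf[symmetric] field_simps)

lemma mat_mult_left: "(mat a ** B :: 'a::comm_semiring_1^'n^'n) = (\<chi> i j. a * B$i$j)"
  by (auto simp: vec_eq_iff mat_def matrix_matrix_mult_def if_distrib if_distribR sum.delta' cong: if_cong)

lemma mat_mult_right: "(B ** mat a :: 'a::comm_semiring_1^'n^'n) = (\<chi> i j. a * B$i$j)"
  by (auto simp: vec_eq_iff mat_def matrix_matrix_mult_def if_distrib if_distribR sum.delta' mult.commute cong: if_cong)

lemma mat_uminus: "mat (- a) = - (mat a :: 'a::ring_1^'n^'n)"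
  by (simp add: vec_eq_iff mat_def)

lemma mat_commute: "(mat a ** B :: 'a::comm_semiring_1^'n^'n) = B ** mat a"
  by (simp add: mat_mult_left mat_mult_right)

lemma mat_mult_mat: "(mat a ** mat b :: 'a::comm_semiring_1^'n^'n) = mat (a * b)"
  unfolding mat_mult_left by (simp add: vec_eq_iff mat_def)

lemma mat_vec: "(mat a *v v :: 'a::comm_semiring_1^'n) = a *s v"
  by (auto simp: vec_eq_iff mat_def matrix_vector_mult_def if_distrib if_distribR sum.delta' cong: if_cong)

lemma mpoly_0[simp]: "mpoly 0 M = 0"
  by (simp add: mpoly_def)

lemma mpoly_pCons[simp]: "mpoly (pCons a p) M = mat a + M ** mpoly p M"
  by (cases "p = 0 \<and> a = 0") (auto simp add: mpoly_def mat_0_eq)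

lemma mpoly_add: "mpoly (p + q) M = mpoly p M + mpoly q M"
proof (induct p arbitrary: q)
  case 0 then show ?case by simp
next
  case (pCons a p)
  then show ?case
    by (cases q) (simp add: mat_add_eq matrix_add_ldistrib algebra_simps)
qed

lemma mpoly_smult: "mpoly (smult c p) M = mat c ** mpoly p M"
proof (induct p)
  case 0 then show ?case by (simp add: mat_mult_left vec_eq_iff)
next
  case (pCons a p)
  then show ?case
    by (simp add: matrix_add_ldistrib mat_mult_mat flip: matrix_mul_assoc)
      (metis mat_commute matrix_mul_assoc)
qed

lemma mpoly_mult: "mpoly (p * q) M = mpoly p M ** mpoly q M"
proof (induct p)
  case 0 then show ?case by (simp add: matrix_matrix_mult_def vec_eq_iff)
next
  case (pCons a p)
  then show ?case
    by (simp add: mpoly_add mpoly_smult matrix_add_rdistrib' matrix_mul_assoc)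
qed

lemma mpoly_commute: "mpoly p M ** mpoly q M = mpoly q M ** mpoly p M"
  by (metis mpoly_mult mult.commute)

lemma mpoly_sum: "finite S \<Longrightarrow> mpoly (\<Sum>i\<in>S. f i) M = (\<Sum>i\<in>S. mpoly (f i) M)"
  by (induct S rule: finite_induct) (auto simp: mpoly_add)

lemma mpoly_linear: "mpoly [:- z, 1:] M = M - mat z"
  by (simp add: mat_add_eq[symmetric] mat_0_eq mat_uminus)

primrec cpow :: "complex^'n^'n \<Rightarrow> nat \<Rightarrow> complex^'n^'n" where
  "cpow M 0 = mat 1"
| "cpow M (Suc k) = M ** cpow M k"

lemma mpoly_monom1: "mpoly (monom 1 k) M = cpow M k"
  by (induct k) (simp_all add: monom_Suc mat_0_eq one_pCons)

lemma mpoly_monom: "mpoly (monom c k) M = mat c ** cpow M k"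
  by (metis mpoly_monom1 mpoly_smult smult_monom mult.right_neutral)

lemma cpow_commute: "cpow M k ** M = M ** cpow M k"
  by (induct k) (simp_all add: matrix_mul_assoc[symmetric])

lemma mpoly_eigen:
  assumes "M *v v = z *s v"
  shows "mpoly p M *v v = poly p z *s v"
proof (induct p)
  case 0 then show ?case by (simp add: matrix_vector_mult_def vec_eq_iff)
next
  case (pCons a p)
  then show ?case
    by (simp add: matrix_vector_mult_add_rdistrib mat_vec matrix_vector_mul_assoc[symmetric]
        vector_scalar_commute assms vector_sadd_rdistrib algebra_simps)
qed


lemma matrix_vector_sum_rdistrib:
  "finite S \<Longrightarrow> (\<Sum>i\<in>S. A i) *v (y::'a::comm_semiring_1^'n) = (\<Sum>i\<in>S. A i *v y)"
proof (induct S rule: finite_induct)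
  case empty then show ?case by (simp add: vec_eq_iff matrix_vector_mult_def)
next
  case (insert x F) then show ?case by (simp add: matrix_vector_mult_add_rdistrib)
qed

lemma exists_annih_vec:
  fixes M :: "complex^'n^'n"
  shows "\<exists>q. q \<noteq> 0 \<and> mpoly q M *v y = 0"
proof -
  define n where "n = CARD('n)"
  define f where "f i = cpow M i *v y" for i
  show ?thesis
  proof (cases "inj_on f {..n}")
    case False
    then obtain i j where ij: "i \<le> n" "j \<le> n" "i \<noteq> j" "f i = f j"
      unfolding inj_on_def by auto
    define q :: "complex poly" where "q = monom 1 j + monom (-1) i"
    have "coeff q j = 1" using ij by (simp add: q_def)
    then have "q \<noteq> 0" by (intro notI) simp
    moreover have "mpoly q M *v y = 0"
      using ij by (simp add: q_def mpoly_add mpoly_monom1 mpoly_monom matrix_vector_mult_add_rdistrib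
          matrix_vector_mul_assoc[symmetric] mat_vec f_def[symmetric])
    ultimately show ?thesis by blast
  next
    case True
    define S where "S = f ` {..n}"
    have fS: "finite S" by (simp add: S_def)
    have cS: "card S = Suc n" using True by (simp add: S_def card_image)
    have "vec.dependent S"
    proof (rule ccontr)
      assume "\<not> vec.dependent S"
      then have "card S \<le> vec.dim S" using vec.independent_bound_general by blast
      also have "\<dots> \<le> vec.dim (UNIV :: (complex^'n) set)" by (rule vec.dim_subset) simp
      also have "\<dots> = n" using vec_dim_card[where ?'a=complex and ?'n='n] by (simp add: n_def)
      finally show False using cS by simp
    qed
    then obtain u where u: "\<exists>v\<in>S. u v \<noteq> 0" "(\<Sum>v\<in>S. u v *s v) = 0"
      using vec.dependent_finite[OF fS] by blast
    define q :: "complex poly" where "q = (\<Sum>i\<le>n. monom (u (f i)) i)"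
    have cq: "coeff q i = u (f i)" if "i \<le> n" for i
      using that by (simp add: q_def coeff_sum coeff_monom)
    from u(1) obtain i where "i \<le> n" "u (f i) \<noteq> 0" by (auto simp: S_def)
    then have qn: "q \<noteq> 0" using cq by force
    have "mpoly q M *v y = (\<Sum>i\<le>n. u (f i) *s f i)"
      by (simp add: q_def mpoly_sum matrix_vector_sum_rdistrib mpoly_monom
          matrix_vector_mul_assoc[symmetric] mat_vec f_def)
    also have "\<dots> = (\<Sum>v\<in>S. u v *s v)"
      unfolding S_def by (rule sum.reindex[OF True, symmetric, unfolded comp_def])
    also have "\<dots> = 0" by (rule u(2))
    finally show ?thesis using qn by blast
  qed
qed

lemma col_axis: "((A::'a::comm_semiring_1^'n^'m) *v axis j 1) $ i = A $ i $ j"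
  by (auto simp: matrix_vector_mult_def axis_def if_distrib if_distribR sum.delta' cong: if_cong)

lemma exists_annih:
  fixes M :: "complex^'n^'n"
  shows "\<exists>Q. Q \<noteq> 0 \<and> mpoly Q M = 0"
proof -
  from exists_annih_vec have "\<forall>j. \<exists>q. q \<noteq> 0 \<and> mpoly q M *v axis j 1 = 0" by blast
  then obtain q where q: "\<And>j. q j \<noteq> 0" "\<And>j. mpoly (q j) M *v axis j 1 = 0" by metis
  define Q where "Q = (\<Prod>j\<in>UNIV. q j)"
  have "Q \<noteq> 0" using q(1) by (simp add: Q_def)
  moreover have "mpoly Q M = 0"
  proof -
    have "mpoly Q M $ i $ j = 0" for i j
    proof -
      have "Q = (\<Prod>k\<in>UNIV - {j}. q k) * q j"
        by (simp add: Q_def prod.remove[of UNIV j] mult.commute)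
      then have "mpoly Q M *v axis j 1 = 0"
        by (simp add: mpoly_mult matrix_vector_mul_assoc[symmetric] q(2))
      then show ?thesis by (metis col_axis zero_index)
    qed
    then show ?thesis by (simp add: vec_eq_iff)
  qed
  ultimately show ?thesis by blast
qed

lemma det_eigen:
  fixes X :: "'a::field^'n^'n"
  shows "det (mat z - X) = 0 \<longleftrightarrow> (\<exists>v. v \<noteq> 0 \<and> X *v v = z *s v)"
proof -
  have "det (mat z - X) = 0 \<longleftrightarrow> \<not> (\<forall>x. (mat z - X) *v x = 0 \<longrightarrow> x = 0)"
    using invertible_det_nz[of "mat z - X"] invertible_left_inverse[of "mat z - X"]
      matrix_left_invertible_ker[of "mat z - X"] by blast
  also have "\<dots> \<longleftrightarrow> (\<exists>v. v \<noteq> 0 \<and> X *v v = z *s v)"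
    by (auto simp: matrix_vector_mult_diff_rdistrib mat_vec; metis)
  finally show ?thesis .
qed

definition cm :: "real^'n^'n \<Rightarrow> complex^'n^'n" where
  "cm M = (\<chi> i j. complex_of_real (M$i$j))"

lemma eig_bound:
  fixes M :: "real^'n^'n"
  assumes "spec_rad M < 1" "cm M *v v = z *s v" "v \<noteq> 0"
  shows "cmod z < 1"
proof -
  obtain Q where Q: "Q \<noteq> 0" "mpoly Q (cm M) = 0" using exists_annih by blast
  have eq: "(\<chi> i j. (if i = j then w else 0) - complex_of_real (M $ i $ j)) = mat w - cm M" for w
    by (simp add: vec_eq_iff mat_def cm_def)
  define S where "S = {cmod w |w. det ((\<chi> i j. (if i = j then w else 0) - complex_of_real (M $ i $ j)) :: complex^'n^'n) = 0}"
  have "S \<subseteq> cmod ` {w. poly Q w = 0}"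
  proof
    fix r assume "r \<in> S"
    then obtain w where w: "r = cmod w" "det (mat w - cm M) = 0" by (auto simp: S_def eq)
    then obtain u where u: "u \<noteq> 0" "cm M *v u = w *s u" using det_eigen by blast
    have "poly Q w *s u = 0" using mpoly_eigen[OF u(2), of Q] Q(2)
      by (simp add: matrix_vector_mult_def vec_eq_iff)
    then have "poly Q w = 0" using u(1) by simp
    then show "r \<in> cmod ` {w. poly Q w = 0}" using w(1) by blast
  qed
  then have "finite S" using poly_roots_finite[OF Q(1)] finite_subset by blast
  moreover have "cmod z \<in> S"
    using assms(2,3) det_eigen[of z "cm M"] by (auto simp: S_def eq)
  ultimately have "cmod z \<le> Max S" by simp
  then show ?thesis using assms(1) by (simp add: spec_rad_def S_def)
qed

lemma rec_tendsto0:
  fixes a b :: "nat \<Rightarrow> complex"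
  assumes z: "cmod z < 1" and b: "b \<longlonglongrightarrow> 0" and rec: "\<And>k. a (Suc k) = z * a k + b k"
  shows "a \<longlonglongrightarrow> 0"
proof (rule LIMSEQ_I)
  fix e :: real assume e: "0 < e"
  define r where "r = cmod z"
  have r: "0 \<le> r" "r < 1" using z by (auto simp: r_def)
  define d where "d = e / 2 - r * (e / 2)"
  have "0 < (e / 2) * (1 - r)" using e r by simp
  then have d: "0 < d" by (simp add: d_def algebra_simps)
  obtain N where N: "\<And>k. k \<ge> N \<Longrightarrow> norm (b k) < d"
    using LIMSEQ_D[OF b d] by auto
  define c where "c = norm (a N)"
  have bound: "norm (a (N + m)) \<le> r ^ m * c + e / 2" for m
  proof (induct m)
    case 0 then show ?case using e by (simp add: c_def)
  next
    case (Suc m)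
    have "norm (a (N + Suc m)) = norm (z * a (N + m) + b (N + m))" by (simp add: rec)
    also have "\<dots> \<le> r * norm (a (N + m)) + norm (b (N + m))"
      by (metis norm_mult norm_triangle_ineq r_def)
    also have "\<dots> \<le> r * (r ^ m * c + e / 2) + d"
      using Suc N[of "N + m"] r by (intro add_mono mult_left_mono) auto
    also have "\<dots> = r ^ Suc m * c + e / 2" by (simp add: d_def algebra_simps)
    finally show ?case .
  qed
  have rc: "(\<lambda>m. r ^ m * c) \<longlonglongrightarrow> 0 * c"
    by (intro tendsto_mult tendsto_const LIMSEQ_power_zero) (use r in auto)
  obtain M where M: "\<And>m. m \<ge> M \<Longrightarrow> norm (r ^ m * c) < e / 2"
    using LIMSEQ_D[OF rc[simplified], of "e/2"] e by auto
  show "\<exists>no. \<forall>n\<ge>no. norm (a n - 0) < e"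
  proof (intro exI allI impI)
    fix n assume "n \<ge> N + M"
    define m where "m = n - N"
    have m: "n = N + m" "m \<ge> M" using \<open>n \<ge> N + M\<close> by (auto simp: m_def)
    have "norm (r ^ m * c) < e / 2" using M[OF m(2)] .
    then have "r ^ m * c < e / 2" using abs_ge_self[of "r ^ m * c"] by simp
    moreover have "norm (a n) \<le> r ^ m * c + e / 2" using bound[of m] unfolding m(1) .
    ultimately show "norm (a n - 0) < e" by simp
  qed
qed

lemma pow_tendsto0:
  fixes M :: "complex^'n^'n"
  assumes eig: "\<And>z v. v \<noteq> 0 \<Longrightarrow> M *v v = z *s v \<Longrightarrow> cmod z < 1"
  shows "p \<noteq> 0 \<Longrightarrow> mpoly p M *v y = 0 \<Longrightarrow> (\<lambda>k. cpow M k *v y) \<longlonglongrightarrow> 0"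
proof (induct "degree p" arbitrary: p y rule: less_induct)
  case less
  show ?case
  proof (cases "degree p = 0")
    case True
    then obtain c where c: "p = [:c:]" by (rule degree_eq_zeroE)
    with less.prems have "c \<noteq> 0" "c *s y = 0" by (auto simp: mat_vec mat_0_eq)
    then have "y = 0" by simp
    then show ?thesis by simp
  next
    case False
    then obtain z where "poly p z = 0"
      using fundamental_theorem_of_algebra[of p] constant_degree[of p] by auto
    then obtain r where p: "p = [:-z,1:] * r"
      by (metis dvdE poly_eq_0_iff_dvd)
    have rn: "r \<noteq> 0" using p less.prems(1) by auto
    have "degree p = degree [:-z,1:] + degree r" unfolding p
      by (rule degree_mult_eq) (use rn in auto)
    then have dr: "degree r < degree p" by simp
    define u where "u = mpoly r M *v y"
    have mp: "mpoly p M = (M - mat z) ** mpoly r M" by (simp only: p mpoly_mult mpoly_linear)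
    have mp2: "mpoly p M = mpoly r M ** (M - mat z)"
      unfolding p mpoly_linear[symmetric] mpoly_mult[symmetric] by (metis mult.commute)
    have Mu: "(M - mat z) *v u = 0"
      using less.prems(2) by (simp add: u_def mp matrix_vector_mul_assoc)
    show ?thesis
    proof (cases "u = 0")
      case True
      then show ?thesis using less.hyps[OF dr rn] by (simp add: u_def)
    next
      case False
      have "M *v u = z *s u" using Mu
        by (simp add: matrix_vector_mult_diff_rdistrib mat_vec)
      then have zl: "cmod z < 1" using eig False by blast
      define y' where "y' = (M - mat z) *v y"
      have "mpoly r M *v y' = 0"
        using less.prems(2) unfolding y'_def mp2 by (simp add: matrix_vector_mul_assoc)
      then have IH: "(\<lambda>k. cpow M k *v y') \<longlonglongrightarrow> 0" using less.hyps[OF dr rn] by simp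
      have My: "M *v y = y' + z *s y"
        by (simp add: y'_def matrix_vector_mult_diff_rdistrib mat_vec)
      have step: "cpow M (Suc k) *v y = cpow M k *v y' + z *s (cpow M k *v y)" for k
      proof -
        have "cpow M (Suc k) *v y = cpow M k *v (M *v y)"
          by (simp add: matrix_vector_mul_assoc cpow_commute)
        then show ?thesis by (simp add: My matrix_vector_right_distrib vector_scalar_commute)
      qed
      show ?thesis
      proof (rule vec_tendstoI)
        fix i
        have "(\<lambda>k. (cpow M k *v y) $ i) \<longlonglongrightarrow> 0"
        proof (rule rec_tendsto0[OF zl])
          show "(\<lambda>k. (cpow M k *v y') $ i) \<longlonglongrightarrow> 0"
            using tendsto_vec_nth[OF IH, of i] by simp
          show "(cpow M (Suc k) *v y) $ i = z * (cpow M k *v y) $ i + (cpow M k *v y') $ i" for k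
            unfolding step by (simp add: add.commute)
        qed
        then show "(\<lambda>k. (cpow M k *v y) $ i) \<longlonglongrightarrow> 0 $ i" by simp
      qed
    qed
  qed
qed

lemma cm_mult: "cm (A ** B) = cm A ** cm B"
  by (simp add: cm_def matrix_matrix_mult_def vec_eq_iff)

lemma cm_one: "cm (mat 1) = mat 1"
  by (simp add: cm_def mat_def vec_eq_iff)

lemma cpow_cm: "cpow (cm M) k = cm (matpow M k)"
  by (induct k) (simp_all add: cm_one cm_mult)

lemma matpow_tendsto0:
  fixes M :: "real^'n^'n"
  assumes "spec_rad M < 1"
  shows "(\<lambda>k. matpow M k) \<longlonglongrightarrow> 0"
proof -
  obtain Q where Q: "Q \<noteq> 0" "mpoly Q (cm M) = 0" using exists_annih by blast
  have lim: "(\<lambda>k. cpow (cm M) k *v y) \<longlonglongrightarrow> 0" for y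
    by (rule pow_tendsto0[OF eig_bound[OF assms] Q(1)]) (simp_all add: Q(2) matrix_vector_mult_def vec_eq_iff)
  show ?thesis
  proof (rule vec_tendstoI, rule vec_tendstoI)
    fix i j
    have "(\<lambda>k. (cpow (cm M) k *v axis j 1) $ i) \<longlonglongrightarrow> 0 $ i"
      by (rule tendsto_vec_nth[OF lim])
    then have "(\<lambda>k. complex_of_real (matpow M k $ i $ j)) \<longlonglongrightarrow> complex_of_real 0"
      unfolding col_axis cpow_cm by (simp add: cm_def)
    then show "(\<lambda>k. matpow M k $ i $ j) \<longlonglongrightarrow> 0 $ i $ j"
      unfolding tendsto_of_real_iff by simp
  qed
qed

lemma inv_props:
  assumes "invertible (X::real^'n^'n)"
  shows "X ** matrix_inv X = mat 1" "matrix_inv X ** X = mat 1"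
proof -
  from assms obtain X' where "X ** X' = mat 1 \<and> X' ** X = mat 1" unfolding invertible_def by blast
  then have "X ** matrix_inv X = mat 1 \<and> matrix_inv X ** X = mat 1"
    unfolding matrix_inv_def by (rule someI)
  then show "X ** matrix_inv X = mat 1" "matrix_inv X ** X = mat 1" by auto
qed

lemma matpow_commute: "matpow X k ** X = X ** matpow X k"
  by (induct k) (simp_all add: matrix_mul_assoc[symmetric])

lemma matpow_sim:
  assumes "Fi ** F = mat 1" "F ** Fi = mat 1"
  shows "matpow (F ** X ** Fi) k = F ** matpow X k ** Fi"
proof (induct k)
  case 0 then show ?case using assms by simp
next
  case (Suc k)
  have "matpow (F ** X ** Fi) (Suc k) = F ** X ** (Fi ** F) ** matpow X k ** Fi"
    by (simp add: Suc matrix_mul_assoc)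
  also have "\<dots> = F ** matpow X (Suc k) ** Fi" using assms by (simp add: matrix_mul_assoc)
  finally show ?case .
qed

lemma mv_sum: "finite S \<Longrightarrow> (A::'a::comm_semiring_1^'n^'m) *v (\<Sum>i\<in>S. v i) = (\<Sum>i\<in>S. A *v v i)"
  by (induct S rule: finite_induct) (simp_all add: matrix_vector_right_distrib)

lemma telescope: "(\<Sum>j<s. matpow X j) ** (mat 1 - X) = mat 1 - matpow X s"
proof (induct s)
  case 0 then show ?case by (simp add: matrix_matrix_mult_def vec_eq_iff)
next
  case (Suc s)
  have "(\<Sum>j<Suc s. matpow X j) ** (mat 1 - X) = (\<Sum>j<s. matpow X j) ** (mat 1 - X) + matpow X s ** (mat 1 - X)"
    by (simp add: matrix_add_rdistrib')
  also have "\<dots> = (mat 1 - matpow X s) + (matpow X s - matpow X (Suc s))"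
    unfolding Suc by (simp add: matrix_diff_ldistrib' matpow_commute)
  also have "\<dots> = mat 1 - matpow X (Suc s)" by simp
  finally show ?case .
qed

lemma telescope2: "(mat 1 - X) ** (\<Sum>j<s. matpow X j) = mat 1 - matpow X s"
proof (induct s)
  case 0 then show ?case by (simp add: matrix_matrix_mult_def vec_eq_iff)
next
  case (Suc s)
  then show ?case
    by (simp add: matrix_add_ldistrib matrix_diff_rdistrib' matrix_mul_assoc)
qed

lemma matseq_vec_tendsto0:
  fixes X :: "nat \<Rightarrow> real^'n^'n"
  assumes "X \<longlonglongrightarrow> 0"
  shows "(\<lambda>k. X k *v w) \<longlonglongrightarrow> 0"
proof (rule vec_tendstoI)
  fix i
  have "(\<lambda>k. \<Sum>j\<in>UNIV. X k $ i $ j * w $ j) \<longlonglongrightarrow> 0"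
  proof (rule tendsto_null_sum)
    fix j
    have "(\<lambda>k. X k $ i $ j) \<longlonglongrightarrow> 0"
      using tendsto_vec_nth[OF tendsto_vec_nth[OF assms, of i], of j] by simp
    then show "(\<lambda>k. X k $ i $ j * w $ j) \<longlonglongrightarrow> 0"
      by (rule tendsto_mult_left_zero)
  qed
  then show "(\<lambda>k. (X k *v w) $ i) \<longlonglongrightarrow> 0 $ i"
    by (simp add: matrix_vector_mult_def)
qed

lemma cone_add:
  assumes "cone K" "convex K" "x \<in> K" "y \<in> K"
  shows "x + y \<in> K"
proof -
  have "(1/2) *\<^sub>R x + (1/2) *\<^sub>R y \<in> K"
    using assms(2-4) unfolding convex_def by (metis field_sum_of_halves le_numeral_extra(4) zero_le_divide_1_iff zero_le_numeral)
  then have "2 *\<^sub>R ((1/2) *\<^sub>R x + (1/2) *\<^sub>R y) \<in> K"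
    using assms(1) unfolding cone_def by auto
  then show ?thesis by (simp add: scaleR_add_right)
qed

lemma cone_sum:
  assumes "cone K" "convex K" "0 \<in> K" "finite S" "\<And>i. i \<in> S \<Longrightarrow> f i \<in> K"
  shows "(\<Sum>i\<in>S. f i) \<in> K"
  using assms(4,5) by (induct S rule: finite_induct) (auto intro: cone_add[OF assms(1,2)] assms(3))

lemma inverse_exists:
  fixes X :: "real^'n^'n"
  assumes "\<And>w. (\<lambda>N. matpow X N *v w) \<longlonglongrightarrow> 0"
  shows "\<exists>Y. Y ** (mat 1 - X) = mat 1 \<and> (mat 1 - X) ** Y = mat 1"
proof -
  have "\<forall>x. (mat 1 - X) *v x = 0 \<longrightarrow> x = 0"
  proof (intro allI impI)
    fix x assume "(mat 1 - X) *v x = 0"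
    then have Xx: "X *v x = x" by (simp add: matrix_vector_mult_diff_rdistrib)
    have "matpow X N *v x = x" for N
      by (induct N) (simp_all add: matrix_vector_mul_assoc[symmetric] Xx)
    then have "(\<lambda>N. x) \<longlonglongrightarrow> 0" using assms[of x] by simp
    then show "x = 0" using LIMSEQ_const_iff by blast
  qed
  then obtain Y where "Y ** (mat 1 - X) = mat 1" using matrix_left_invertible_ker by blast
  then show ?thesis using matrix_left_right_inverse by blast
qed

lemma neumann_nonneg:
  fixes X Y :: "real^'n^'n"
  assumes K: "cone K" "convex K" "closed K" "0 \<in> K"
    and X: "K_nonneg K X" and lim: "\<And>w. (\<lambda>N. matpow X N *v w) \<longlonglongrightarrow> 0"
    and Y: "Y ** (mat 1 - X) = mat 1" "(mat 1 - X) ** Y = mat 1"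
  shows "K_nonneg K Y" "\<And>v. v \<in> K \<Longrightarrow> Y *v v - v \<in> K"
proof -
  have XK: "X *v v \<in> K" if "v \<in> K" for v using X that unfolding K_nonneg_def by blast
  have XpK: "matpow X j *v v \<in> K" if "v \<in> K" for v j
    using that by (induct j) (simp_all add: matrix_vector_mul_assoc[symmetric] XK)
  have YK: "Y *v v \<in> K" if v: "v \<in> K" for v
  proof -
    have eq: "(\<Sum>j<N. matpow X j) *v v = Y *v v - matpow X N *v (Y *v v)" for N
    proof -
      have "(\<Sum>j<N. matpow X j) = (\<Sum>j<N. matpow X j) ** (mat 1 - X) ** Y"
        by (simp add: Y(2) matrix_mul_assoc[symmetric])
      also have "\<dots> = Y - matpow X N ** Y" by (simp add: telescope matrix_diff_rdistrib')
      finally show ?thesis by (simp add: matrix_vector_mult_diff_rdistrib matrix_vector_mul_assoc)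
    qed
    have "(\<lambda>N. Y *v v - matpow X N *v (Y *v v)) \<longlonglongrightarrow> Y *v v - 0"
      by (intro tendsto_diff tendsto_const lim)
    then have "(\<lambda>N. (\<Sum>j<N. matpow X j) *v v) \<longlonglongrightarrow> Y *v v" by (simp add: eq)
    moreover have "(\<Sum>j<N. matpow X j) *v v \<in> K" for N
      by (simp add: matrix_vector_sum_rdistrib) (intro cone_sum[OF K(1,2,4)] XpK v; simp)
    ultimately show ?thesis using closed_sequentially[OF K(3), of "\<lambda>N. (\<Sum>j<N. matpow X j) *v v"] by blast
  qed
  then show "K_nonneg K Y" unfolding K_nonneg_def by blast
  fix v assume "v \<in> K"
  have "Y *v v - v = X *v (Y *v v)"
  proof -
    have "(mat 1 - X) *v (Y *v v) = v" by (simp add: matrix_vector_mul_assoc Y(2))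
    then show ?thesis by (simp add: matrix_vector_mult_diff_rdistrib algebra_simps)
  qed
  then show "Y *v v - v \<in> K" using XK YK \<open>v \<in> K\<close> by simp
qed

lemma pointed_bound:
  fixes K :: "(real^'n) set"
  assumes K: "cone K" "closed K" "K \<inter> uminus ` K = {0}" "K \<noteq> {}"
  shows "\<exists>C\<ge>0. \<forall>v. w - v \<in> K \<and> w + v \<in> K \<longrightarrow> norm v \<le> C"
proof -
  define h where "h d = max (infdist d K) (infdist (-d) K)" for d :: "real^'n"
  have hc: "continuous_on (sphere 0 1) h"
    unfolding h_def
    by (intro continuous_on_max continuous_on_infdist continuous_on_id continuous_on_minus)
  obtain i :: 'n where True by blast
  have "axis i (1::real) \<in> sphere (0::real^'n) 1" by (simp add: norm_axis_1)
  then have ne: "sphere (0::real^'n) 1 \<noteq> {}" by blast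
  obtain d0 where d0: "d0 \<in> sphere 0 1" "\<And>y. y \<in> sphere 0 1 \<Longrightarrow> h d0 \<le> h y"
    using continuous_attains_inf[OF compact_sphere ne hc] by blast
  define \<delta> where "\<delta> = h d0"
  have dpos: "\<delta> > 0"
  proof (rule ccontr)
    assume "\<not> \<delta> > 0"
    then have "infdist d0 K \<le> 0" "infdist (-d0) K \<le> 0"
      by (auto simp: \<delta>_def h_def)
    then have "infdist d0 K = 0" "infdist (-d0) K = 0"
      using infdist_nonneg[of d0 K] infdist_nonneg[of "-d0" K] by auto
    then have "d0 \<in> K" "-d0 \<in> K" using in_closed_iff_infdist_zero[OF K(2) K(4)] by auto
    then have "d0 \<in> K \<inter> uminus ` K" by (auto intro: image_eqI[of _ _ "-d0"])
    then have "d0 = 0" using K(3) by auto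
    then show False using d0(1) by simp
  qed
  show ?thesis
  proof (intro exI[of _ "norm w / \<delta>"] conjI allI impI)
    show "0 \<le> norm w / \<delta>" using dpos by simp
    fix v assume v: "w - v \<in> K \<and> w + v \<in> K"
    show "norm v \<le> norm w / \<delta>"
    proof (cases "v = 0")
      case True then show ?thesis using dpos by simp
    next
      case False
      define L where "L = norm v"
      have L: "L > 0" using False by (simp add: L_def)
      define d where "d = (1 / L) *\<^sub>R v"
      have dS: "d \<in> sphere 0 1" using L by (simp add: d_def L_def)
      have "(1 / L) *\<^sub>R (w + v) \<in> K" "(1 / L) *\<^sub>R (w - v) \<in> K"
        using v K(1) L unfolding cone_def by auto
      then have in1: "(1 / L) *\<^sub>R w + d \<in> K" and in2: "(1 / L) *\<^sub>R w + (- d) \<in> K"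
        by (simp_all add: d_def scaleR_add_right scaleR_diff_right)
      have "infdist d K \<le> norm w / L"
        using infdist_le[OF in1, of d] L by (simp add: dist_norm)
      moreover have "infdist (-d) K \<le> norm w / L"
        using infdist_le[OF in2, of "-d"] L by (simp add: dist_norm)
      ultimately have "h d \<le> norm w / L" by (simp add: h_def)
      then have "\<delta> \<le> norm w / L" using d0(2)[OF dS] by (simp add: \<delta>_def)
      then have "\<delta> * L \<le> norm w" using L by (simp add: pos_le_divide_eq)
      then show ?thesis using dpos L by (simp add: pos_le_divide_eq L_def mult.commute)
    qed
  qed
qed

lemma mv_scaleR: "(A::real^'n^'m) *v (c *\<^sub>R x) = c *\<^sub>R (A *v x)"
  by (simp add: vec_eq_iff matrix_vector_mult_def sum_distrib_left mult_ac)

lemma mm_sum_left: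
  fixes A :: "'a::semiring_1^'n^'n" and B :: "'b \<Rightarrow> 'a^'n^'n"
  shows "finite S \<Longrightarrow> A ** (\<Sum>i\<in>S. B i) = (\<Sum>i\<in>S. A ** B i)"
  by (induct S rule: finite_induct) (simp_all add: matrix_add_ldistrib)

lemma mm_sum_right:
  fixes A :: "'a::semiring_1^'n^'n" and B :: "'b \<Rightarrow> 'a^'n^'n"
  shows "finite S \<Longrightarrow> (\<Sum>i\<in>S. B i) ** A = (\<Sum>i\<in>S. B i ** A)"
proof (induct S rule: finite_induct)
  case empty then show ?case by simp
next
  case (insert x F) then show ?case using matrix_add_rdistrib'[of "B x" "sum B F" A] by simp
qed

lemma frac_lt:
  fixes a r :: real
  assumes "0 \<le> a" "0 < r"
  shows "r / (2 * (a + 1)) * a < r"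
proof -
  have "a / (2 * (a + 1)) < 1" using assms(1) by (simp add: divide_less_eq)
  then have "r * (a / (2 * (a + 1))) < r * 1" using assms(2) by (rule mult_strict_left_mono)
  then show ?thesis by simp
qed

theorem theorem3p5:
  fixes K :: "(real^'n) set"
    and A U V F G :: "real^'n^'n"
    and b :: "real^'n"
    and s :: "nat \<Rightarrow> nat"
    and x :: "nat \<Rightarrow> real^'n"
  assumes "proper_cone K"
    and "invertible A"
    and "K_regular_splitting K A U V" and "convergent_splitting U V"
    and "K_weak_regular_splitting_II K U F G" and "convergent_splitting F G"
    and "V ** matrix_inv F ** G = G ** matrix_inv F ** V"
    and "\<And>k. s k \<ge> 1"
    and "\<And>k. x (Suc k) = matpow (matrix_inv F ** G) (s k) *v x k
            + (\<Sum>j<s k. matpow (matrix_inv F ** G) j *v (matrix_inv F *v (V *v x k + b)))"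
  shows "x \<longlonglongrightarrow> matrix_inv A *v b"
proof -
  have K: "cone K" "closed K" "convex K" "K \<inter> uminus ` K = {0}" "interior K \<noteq> {}"
    using assms(1) unfolding proper_cone_def by auto
  obtain e where "e \<in> interior K" using K(5) by auto
  then obtain r where r: "r > 0" "ball e r \<subseteq> K" using mem_interior by blast
  have eK: "e \<in> K" using r by auto
  have K0: "0 \<in> K" using K(1) eK unfolding cone_def by (metis scale_zero_left order_refl)
  have Kscale: "c *\<^sub>R v \<in> K" if "c \<ge> 0" "v \<in> K" for c v using K(1) that unfolding cone_def by blast
  have Kadd: "v + u \<in> K" if "v \<in> K" "u \<in> K" for v u using cone_add[OF K(1) K(3) that] .
  define Fi where "Fi = matrix_inv F"
  define Ui where "Ui = matrix_inv U"
  define P where "P = Fi ** G"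
  define Q where "Q = G ** Fi"
  define H where "H = Ui ** V"
  define W where "W = V ** Fi"
  have AUV: "A = U - V" and invU: "invertible U" and UiK: "K_nonneg K Ui" and VK: "K_nonneg K V"
    using assms(3) unfolding K_regular_splitting_def Ui_def by auto
  have UFG: "U = F - G" and invF: "invertible F" and FiK: "K_nonneg K Fi" and QK: "K_nonneg K Q"
    using assms(5) unfolding K_weak_regular_splitting_II_def Fi_def Q_def by auto
  have FFi: "F ** Fi = mat 1" "Fi ** F = mat 1" using inv_props[OF invF] by (simp_all add: Fi_def)
  have UUi: "U ** Ui = mat 1" "Ui ** U = mat 1" using inv_props[OF invU] by (simp_all add: Ui_def)
  have AAi: "A ** matrix_inv A = mat 1" using inv_props[OF assms(2)] by simp
  have Plim: "(\<lambda>k. matpow P k) \<longlonglongrightarrow> 0"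
    using matpow_tendsto0 assms(6) unfolding convergent_splitting_def P_def Fi_def by blast
  have Hlim: "(\<lambda>k. matpow H k) \<longlonglongrightarrow> 0"
    using matpow_tendsto0 assms(4) unfolding convergent_splitting_def H_def Ui_def by blast
  have QP: "Q = F ** P ** Fi" by (simp add: Q_def P_def matrix_mul_assoc FFi)
  have Qpow: "matpow Q k = F ** matpow P k ** Fi" for k
    unfolding QP by (rule matpow_sim[OF FFi(2) FFi(1)])
  have Qlim: "(\<lambda>N. matpow Q N *v w) \<longlonglongrightarrow> 0" for w
  proof -
    have "(\<lambda>N. F *v (matpow P N *v (Fi *v w))) \<longlonglongrightarrow> 0"
      by (rule bounded_linear.tendsto_zero[OF matrix_vector_mul_bounded_linear matseq_vec_tendsto0[OF Plim]])
    then show ?thesis by (simp add: Qpow matrix_vector_mul_assoc matrix_mul_assoc)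
  qed
  define Y where "Y = F ** Ui"
  have Y2: "(mat 1 - Q) ** Y = mat 1"
  proof -
    have "(mat 1 - Q) ** Y = (F - G ** (Fi ** F)) ** Ui"
      by (simp add: Y_def Q_def matrix_diff_rdistrib' matrix_mul_assoc)
    also have "\<dots> = U ** Ui" by (simp add: FFi UFG)
    finally show ?thesis by (simp add: UUi)
  qed
  have Y1: "Y ** (mat 1 - Q) = mat 1" using Y2 matrix_left_right_inverse by blast
  have YK: "K_nonneg K Y" and Yv: "\<And>v. v \<in> K \<Longrightarrow> Y *v v - v \<in> K"
    using neumann_nonneg[OF K(1,3,2) K0 QK Qlim Y1 Y2] by auto
  define M where "M = Y ** W"
  have MH: "M = F ** H ** Fi" by (simp add: M_def Y_def H_def W_def matrix_mul_assoc)
  have Mpow: "matpow M k = F ** matpow H k ** Fi" for k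
    unfolding MH by (rule matpow_sim[OF FFi(2) FFi(1)])
  have Mlim: "(\<lambda>N. matpow M N *v w) \<longlonglongrightarrow> 0" for w
  proof -
    have "(\<lambda>N. F *v (matpow H N *v (Fi *v w))) \<longlonglongrightarrow> 0"
      by (rule bounded_linear.tendsto_zero[OF matrix_vector_mul_bounded_linear matseq_vec_tendsto0[OF Hlim]])
    then show ?thesis by (simp add: Mpow matrix_vector_mul_assoc matrix_mul_assoc)
  qed
  obtain Z where Z: "Z ** (mat 1 - M) = mat 1" "(mat 1 - M) ** Z = mat 1"
    using inverse_exists[OF Mlim] by blast
  have nn: "X *v v \<in> K" if "K_nonneg K X" "v \<in> K" for X v
    using that unfolding K_nonneg_def by blast
  have WK: "K_nonneg K W"
    unfolding K_nonneg_def W_def using nn[OF VK] nn[OF FiK]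
    by (auto simp: matrix_vector_mul_assoc[symmetric])
  have MK: "K_nonneg K M"
    unfolding K_nonneg_def M_def using nn[OF YK] nn[OF WK]
    by (auto simp: matrix_vector_mul_assoc[symmetric])
  have ZK: "K_nonneg K Z" and Zv: "\<And>v. v \<in> K \<Longrightarrow> Z *v v - v \<in> K"
    using neumann_nonneg[OF K(1,3,2) K0 MK Mlim Z] by auto
  define w0 where "w0 = Z *v (Y *v e)"
  have YeK: "Y *v e \<in> K" using nn[OF YK eK] .
  have w0e: "w0 - e \<in> K"
  proof -
    have "w0 - e = (Z *v (Y *v e) - Y *v e) + (Y *v e - e)" by (simp add: w0_def)
    then show ?thesis using Kadd[OF Zv[OF YeK] Yv[OF eK]] by simp
  qed
  have ballw0: "ball w0 r \<subseteq> K"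
  proof
    fix y assume "y \<in> ball w0 r"
    then have "y - (w0 - e) \<in> ball e r" by (simp add: dist_norm algebra_simps)
    then have "y - (w0 - e) \<in> K" using r by auto
    from Kadd[OF this w0e] show "y \<in> K" by simp
  qed
  define R where "R s' = matpow Q s' + (\<Sum>j<s'. matpow Q j) ** W" for s'
  have QpK: "K_nonneg K (matpow Q j)" for j
  proof -
    have "matpow Q j *v v \<in> K" if "v \<in> K" for v
      using that by (induct j) (simp_all add: matrix_vector_mul_assoc[symmetric] nn[OF QK])
    then show ?thesis unfolding K_nonneg_def by blast
  qed
  have RK: "K_nonneg K (R s')" for s'
  proof -
    have "R s' *v v \<in> K" if v: "v \<in> K" for v
    proof -
      have "R s' *v v = matpow Q s' *v v + (\<Sum>j<s'. matpow Q j *v (W *v v))"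
        by (simp add: R_def matrix_vector_mult_add_rdistrib matrix_vector_sum_rdistrib
            matrix_vector_mul_assoc[symmetric])
      moreover have "(\<Sum>j<s'. matpow Q j *v (W *v v)) \<in> K"
        by (rule cone_sum[OF K(1,3) K0]) (auto intro: nn[OF QpK] nn[OF WK] v)
      ultimately show ?thesis using Kadd nn[OF QpK v] by simp
    qed
    then show ?thesis unfolding K_nonneg_def by blast
  qed
  have Rw0: "R s' *v w0 = w0 - (\<Sum>j<s'. matpow Q j) *v e" for s'
  proof -
    let ?S = "\<Sum>j<s'. matpow Q j"
    have "mat 1 - R s' = ?S ** ((mat 1 - Q) - W)"
      by (simp add: R_def matrix_diff_ldistrib' telescope[symmetric] matrix_mul_assoc)
    also have "(mat 1 - Q) - W = (mat 1 - Q) ** (mat 1 - M)"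
      by (simp add: matrix_diff_ldistrib' M_def matrix_mul_assoc Y2)
    finally have "(mat 1 - R s') ** Z ** Y = ?S ** (mat 1 - Q) ** ((mat 1 - M) ** Z) ** Y"
      by (simp add: matrix_mul_assoc)
    also have "\<dots> = ?S" by (simp add: Z(2) matrix_mul_assoc[symmetric] Y2)
    finally have "(mat 1 - R s') *v w0 = ?S *v e"
      by (simp add: w0_def matrix_vector_mul_assoc matrix_mul_assoc)
    then show ?thesis by (simp add: matrix_vector_mult_diff_rdistrib algebra_simps)
  qed
  have Rcontr: "w0 - e - R s' *v w0 \<in> K" if s1: "s' \<ge> 1" for s'
  proof -
    obtain s'' where s'': "s' = Suc s''" using s1 by (cases s') auto
    have "w0 - e - R s' *v w0 = (\<Sum>j<s'. matpow Q j *v e) - e"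
      by (simp add: Rw0 matrix_vector_sum_rdistrib)
    also have "\<dots> = (\<Sum>j<s''. matpow Q (Suc j) *v e)"
      unfolding s'' sum.lessThan_Suc_shift by simp
    finally show ?thesis
      using cone_sum[OF K(1,3) K0, of "{..<s''}" "\<lambda>j. matpow Q (Suc j) *v e"] nn[OF QpK eK]
      by (simp del: matpow.simps)
  qed
  define t where "t = min (1/2) (r / (2 * (norm w0 + 1)))"
  have "0 < 2 * (norm w0 + 1)" by (simp add: add_nonneg_pos)
  then have "0 < r / (2 * (norm w0 + 1))" using divide_pos_pos[OF r(1)] by blast
  then have t: "0 < t" "t \<le> 1/2" unfolding t_def by (simp_all add: min_def)
  have etw: "e - t *\<^sub>R w0 \<in> K"
  proof -
    have "t * norm w0 \<le> (r / (2 * (norm w0 + 1))) * norm w0"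
      by (intro mult_right_mono) (auto simp: t_def)
    also have "\<dots> < r" using frac_lt[OF norm_ge_zero r(1)] .
    finally have "dist e (e - t *\<^sub>R w0) < r" using t by (simp add: dist_norm)
    then show ?thesis using r by auto
  qed
  define \<theta> where "\<theta> = 1 - t"
  have \<theta>: "0 < \<theta>" "\<theta> < 1" using t by (auto simp: \<theta>_def)
  have contr: "\<theta> *\<^sub>R w0 - R s' *v w0 \<in> K" if "s' \<ge> 1" for s'
  proof -
    have eq: "\<theta> *\<^sub>R w0 - R s' *v w0 = (w0 - e - R s' *v w0) + (e - t *\<^sub>R w0)"
      by (simp add: \<theta>_def algebra_simps)
    show ?thesis unfolding eq by (rule Kadd[OF Rcontr[OF that] etw])
  qed
  define Bd where "Bd v c \<longleftrightarrow> c *\<^sub>R w0 - v \<in> K \<and> c *\<^sub>R w0 + v \<in> K" for v c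
  have Bstep: "Bd (R s' *v v) (\<theta> * c)" if "c \<ge> 0" "Bd v c" "s' \<ge> 1" for v c s'
  proof -
    have "(\<theta> * c) *\<^sub>R w0 - R s' *v v = c *\<^sub>R (\<theta> *\<^sub>R w0 - R s' *v w0) + R s' *v (c *\<^sub>R w0 - v)"
      by (simp add: matrix_vector_mult_diff_distrib mv_scaleR algebra_simps)
    moreover have "(\<theta> * c) *\<^sub>R w0 + R s' *v v = c *\<^sub>R (\<theta> *\<^sub>R w0 - R s' *v w0) + R s' *v (c *\<^sub>R w0 + v)"
      by (simp add: matrix_vector_right_distrib mv_scaleR algebra_simps)
    ultimately show ?thesis
      using that Kadd Kscale[OF that(1) contr[OF that(3)]] nn[OF RK] unfolding Bd_def by auto
  qed
  define xs where "xs = matrix_inv A *v b"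
  define z where "z k = F *v (x k - xs)" for k
  have Axs: "A *v xs = b" by (simp add: xs_def matrix_vector_mul_assoc AAi)
  have Uxs: "U *v xs = V *v xs + b"
    using Axs unfolding AUV by (simp add: matrix_vector_mult_diff_rdistrib algebra_simps)
  have FiU: "Fi ** U = mat 1 - P" by (simp add: UFG P_def matrix_diff_ldistrib' FFi)
  have WF: "W ** F = V" by (simp add: W_def matrix_mul_assoc[symmetric] FFi)
  have QF: "matpow Q j ** F = F ** matpow P j" for j
    by (simp add: Qpow matrix_mul_assoc[symmetric] FFi)
  have zrec: "z (Suc k) = R (s k) *v z k" for k
  proof -
    define \<sigma> where "\<sigma> = s k"
    define S where "S = (\<Sum>j<\<sigma>. matpow P j)"
    have x1: "x (Suc k) = matpow P \<sigma> *v x k + S *v (Fi *v (V *v x k + b))"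
      using assms(9)[of k] by (simp add: \<sigma>_def S_def P_def Fi_def matrix_vector_sum_rdistrib)
    have fixp: "xs = matpow P \<sigma> *v xs + S *v (Fi *v (V *v xs + b))"
    proof -
      have "S *v (Fi *v (V *v xs + b)) = (S ** (mat 1 - P)) *v xs"
        by (simp add: Uxs[symmetric] matrix_vector_mul_assoc FiU)
      also have "\<dots> = xs - matpow P \<sigma> *v xs"
        by (simp add: S_def telescope matrix_vector_mult_diff_rdistrib)
      finally show ?thesis by simp
    qed
    have d: "x (Suc k) - xs = matpow P \<sigma> *v (x k - xs) + S *v (Fi *v (V *v (x k - xs)))"
    proof -
      have "x (Suc k) - xs = (matpow P \<sigma> *v x k + S *v (Fi *v (V *v x k + b)))
          - (matpow P \<sigma> *v xs + S *v (Fi *v (V *v xs + b)))"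
        by (rule arg_cong2[OF x1 fixp])
      also have "\<dots> = matpow P \<sigma> *v (x k - xs) + S *v (Fi *v (V *v (x k - xs)))"
        by (simp add: matrix_vector_right_distrib matrix_vector_mult_diff_distrib algebra_simps)
      finally show ?thesis .
    qed
    have FSFi: "F ** S ** Fi = (\<Sum>j<\<sigma>. matpow Q j)"
      by (simp add: S_def mm_sum_left mm_sum_right Qpow)
    have "z (Suc k) = (F ** matpow P \<sigma>) *v (x k - xs) + (F ** S ** Fi ** V) *v (x k - xs)"
      unfolding z_def d by (simp add: matrix_vector_right_distrib matrix_vector_mul_assoc matrix_mul_assoc)
    also have "\<dots> = (matpow Q \<sigma> ** F) *v (x k - xs) + ((\<Sum>j<\<sigma>. matpow Q j) ** W ** F) *v (x k - xs)"
      by (simp add: QF FSFi WF[symmetric] matrix_mul_assoc)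
    also have "\<dots> = R (s k) *v z k"
      by (simp add: R_def \<sigma>_def z_def matrix_vector_mult_add_rdistrib matrix_vector_mul_assoc matrix_add_rdistrib')
    finally show ?thesis .
  qed
  define c0 where "c0 = 2 * (norm (z 0) + 1) / r"
  have "0 < 2 * (norm (z 0) + 1)" by (simp add: add_nonneg_pos)
  then have c0: "c0 > 0" unfolding c0_def using r(1) by (rule divide_pos_pos)
  have B0: "Bd (z 0) c0"
  proof -
    have nz: "norm ((1 / c0) *\<^sub>R z 0) < r"
    proof -
      have "norm ((1 / c0) *\<^sub>R z 0) = r / (2 * (norm (z 0) + 1)) * norm (z 0)"
        using c0 r by (simp add: c0_def)
      also have "\<dots> < r" using frac_lt[OF norm_ge_zero r(1)] .
      finally show ?thesis .
    qed
    have "w0 - (1 / c0) *\<^sub>R z 0 \<in> ball w0 r" "w0 + (1 / c0) *\<^sub>R z 0 \<in> ball w0 r"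
      using nz by (simp_all add: dist_norm)
    then have "w0 - (1 / c0) *\<^sub>R z 0 \<in> K" "w0 + (1 / c0) *\<^sub>R z 0 \<in> K"
      using ballw0 by (meson subsetD)+
    then have "c0 *\<^sub>R (w0 - (1 / c0) *\<^sub>R z 0) \<in> K" "c0 *\<^sub>R (w0 + (1 / c0) *\<^sub>R z 0) \<in> K"
      using Kscale c0 by auto
    then show ?thesis using c0 by (simp add: Bd_def scaleR_diff_right scaleR_add_right)
  qed
  have Bk: "Bd (z k) (c0 * \<theta> ^ k)" for k
  proof (induct k)
    case 0 then show ?case using B0 by simp
  next
    case (Suc k)
    have "Bd (R (s k) *v z k) (\<theta> * (c0 * \<theta> ^ k))"
      by (rule Bstep) (use Suc c0 \<theta> assms(8) in auto)
    then show ?case by (simp add: zrec mult_ac)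
  qed
  obtain C where C: "C \<ge> 0" "\<And>v. w0 - v \<in> K \<and> w0 + v \<in> K \<Longrightarrow> norm v \<le> C"
    using pointed_bound[OF K(1,2,4)] eK by blast
  have zb: "norm (z k) \<le> c0 * \<theta> ^ k * C" for k
  proof -
    define c where "c = c0 * \<theta> ^ k"
    have c: "c > 0" using c0 \<theta> by (simp add: c_def)
    have "Bd (z k) c" using Bk by (simp add: c_def)
    then have "(1 / c) *\<^sub>R (c *\<^sub>R w0 - z k) \<in> K" "(1 / c) *\<^sub>R (c *\<^sub>R w0 + z k) \<in> K"
      using Kscale c unfolding Bd_def by auto
    then have "w0 - (1 / c) *\<^sub>R z k \<in> K \<and> w0 + (1 / c) *\<^sub>R z k \<in> K"
      using c by (simp add: scaleR_diff_right scaleR_add_right)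
    then have "norm ((1 / c) *\<^sub>R z k) \<le> C" by (rule C(2))
    then have "norm (z k) / c \<le> C" using c by simp
    then show ?thesis using c by (simp add: c_def pos_divide_le_eq mult_ac)
  qed
  have "(\<lambda>k. c0 * \<theta> ^ k * C) \<longlonglongrightarrow> c0 * 0 * C"
    by (intro tendsto_mult tendsto_const LIMSEQ_power_zero) (use \<theta> in auto)
  then have glim: "(\<lambda>k. c0 * \<theta> ^ k * C) \<longlonglongrightarrow> 0" by simp
  have "\<forall>k. norm (z k) \<le> c0 * \<theta> ^ k * C" using zb by blast
  then have "eventually (\<lambda>k. norm (z k) \<le> c0 * \<theta> ^ k * C) sequentially" by (rule always_eventually)
  from Lim_null_comparison[OF this glim] have zlim: "z \<longlonglongrightarrow> 0" .
  have "(\<lambda>k. Fi *v z k) \<longlonglongrightarrow> 0"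
    by (rule bounded_linear.tendsto_zero[OF matrix_vector_mul_bounded_linear zlim])
  moreover have "Fi *v z k = x k - xs" for k
    by (simp add: z_def matrix_vector_mul_assoc FFi)
  ultimately have "(\<lambda>k. x k - xs) \<longlonglongrightarrow> 0" by simp
  then have "(\<lambda>k. (x k - xs) + xs) \<longlonglongrightarrow> 0 + xs" by (intro tendsto_add tendsto_const)
  then show ?thesis by (simp add: xs_def)
qed

end
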